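(* Let $L$ be a finite-dimensional Lie algebra over a field $F$, let $M$ be a maximal subalgebra of $L$, and let $C$ and $D$ be ideal completions of $M$ in $L$. Then $C/k(C)\cong D/k(D)$.
   Context: For a nonzero subalgebra $B$ of $L$, the strict core $k(B)$ is the sum of all ideals of $L$ that are proper subalgebras of $B$ (it is $0$ if there are none). A subalgebra $C$ of $L$ is a completion of $M$ if $C\not\subseteq M$ but every proper subalgebra of $C$ that is an ideal of $L$ is contained in $M$. An ideal completion of $M$ is a completion of $M$ which is an ideal of $L$; for such $C$, $k(C)$ is an ideal of $L$ contained in $C$, so $C/k(C)$ is a Lie algebra. *)

theory Defs
  imports Main "HOL.Vector_Spaces"
begin

definition lie_algebra :: "('a::field \<Rightarrow> 'v::ab_group_add \<Rightarrow> 'v) \<Rightarrow> ('v \<Rightarrow> 'v \<Rightarrow> 'v) \<Rightarrow> bool" where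
  "lie_algebra scale br \<longleftrightarrow>
     vector_space scale \<and>
     (\<forall>x y z. br (x + y) z = br x z + br y z) \<and>
     (\<forall>x y z. br x (y + z) = br x y + br x z) \<and>
     (\<forall>c x y. br (scale c x) y = scale c (br x y)) \<and>
     (\<forall>c x y. br x (scale c y) = scale c (br x y)) \<and>
     (\<forall>x. br x x = 0) \<and>
     (\<forall>x y z. br x (br y z) + br y (br z x) + br z (br x y) = 0)"

definition finite_dim :: "('a::field \<Rightarrow> 'v::ab_group_add \<Rightarrow> 'v) \<Rightarrow> bool" where
  "finite_dim scale \<longleftrightarrow> (\<exists>B. finite B \<and> module.span scale B = UNIV)"

definition lie_subalgebra :: "('a::field \<Rightarrow> 'v::ab_group_add \<Rightarrow> 'v) \<Rightarrow> ('v \<Rightarrow> 'v \<Rightarrow> 'v) \<Rightarrow> 'v set \<Rightarrow> bool" where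
  "lie_subalgebra scale br S \<longleftrightarrow> module.subspace scale S \<and> (\<forall>x\<in>S. \<forall>y\<in>S. br x y \<in> S)"

definition lie_ideal :: "('a::field \<Rightarrow> 'v::ab_group_add \<Rightarrow> 'v) \<Rightarrow> ('v \<Rightarrow> 'v \<Rightarrow> 'v) \<Rightarrow> 'v set \<Rightarrow> bool" where
  "lie_ideal scale br I \<longleftrightarrow> module.subspace scale I \<and> (\<forall>x. \<forall>y\<in>I. br x y \<in> I)"

definition maximal_subalgebra :: "('a::field \<Rightarrow> 'v::ab_group_add \<Rightarrow> 'v) \<Rightarrow> ('v \<Rightarrow> 'v \<Rightarrow> 'v) \<Rightarrow> 'v set \<Rightarrow> bool" where
  "maximal_subalgebra scale br M \<longleftrightarrow> lie_subalgebra scale br M \<and> M \<noteq> UNIV \<and>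
     (\<forall>S. lie_subalgebra scale br S \<and> M \<subseteq> S \<longrightarrow> S = M \<or> S = UNIV)"

text \<open>Strict core: sum (span of the union) of all ideals of L that are proper
  subalgebras of B; it is 0 if there are none.\<close>
definition strict_core :: "('a::field \<Rightarrow> 'v::ab_group_add \<Rightarrow> 'v) \<Rightarrow> ('v \<Rightarrow> 'v \<Rightarrow> 'v) \<Rightarrow> 'v set \<Rightarrow> 'v set" where
  "strict_core scale br B = module.span scale
     (\<Union>{I. lie_ideal scale br I \<and> lie_subalgebra scale br I \<and> I \<subset> B})"

definition completion :: "('a::field \<Rightarrow> 'v::ab_group_add \<Rightarrow> 'v) \<Rightarrow> ('v \<Rightarrow> 'v \<Rightarrow> 'v) \<Rightarrow> 'v set \<Rightarrow> 'v set \<Rightarrow> bool" where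
  "completion scale br M C \<longleftrightarrow> lie_subalgebra scale br C \<and> \<not> C \<subseteq> M \<and>
     (\<forall>I. lie_subalgebra scale br I \<and> I \<subset> C \<and> lie_ideal scale br I \<longrightarrow> I \<subseteq> M)"

definition ideal_completion :: "('a::field \<Rightarrow> 'v::ab_group_add \<Rightarrow> 'v) \<Rightarrow> ('v \<Rightarrow> 'v \<Rightarrow> 'v) \<Rightarrow> 'v set \<Rightarrow> 'v set \<Rightarrow> bool" where
  "ideal_completion scale br M C \<longleftrightarrow> completion scale br M C \<and> lie_ideal scale br C"

definition coset :: "'v::ab_group_add set \<Rightarrow> 'v \<Rightarrow> 'v set" where
  "coset I x = (\<lambda>i. x + i) ` I"

definition quotient_set :: "'v::ab_group_add set \<Rightarrow> 'v set \<Rightarrow> 'v set set" where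
  "quotient_set C I = coset I ` C"

text \<open>Isomorphism of the quotient Lie algebras C/I and D/J: a bijection of cosets
  compatible with the quotient operations (defined via representatives).\<close>
definition quotient_lie_iso :: "('a::field \<Rightarrow> 'v::ab_group_add \<Rightarrow> 'v) \<Rightarrow> ('v \<Rightarrow> 'v \<Rightarrow> 'v) \<Rightarrow>
    'v set \<Rightarrow> 'v set \<Rightarrow> 'v set \<Rightarrow> 'v set \<Rightarrow> bool" where
  "quotient_lie_iso scale br C I D J \<longleftrightarrow>
     (\<exists>g. bij_betw g (quotient_set C I) (quotient_set D J) \<and>
       (\<forall>x\<in>C. \<forall>y\<in>C. \<forall>x'\<in>D. \<forall>y'\<in>D.
          g (coset I x) = coset J x' \<and> g (coset I y) = coset J y' \<longrightarrow>
            g (coset I (x + y)) = coset J (x' + y') \<and>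
            (\<forall>c. g (coset I (scale c x)) = coset J (scale c x')) \<and>
            g (coset I (br x y)) = coset J (br x' y')))"

end

theory Submission
  imports Defs
begin

definition ssum :: "'v::ab_group_add set \<Rightarrow> 'v set \<Rightarrow> 'v set" where
  "ssum S T = {x + y |x y. x \<in> S \<and> y \<in> T}"

lemma coset_eq:
  assumes "0 \<in> K" "\<And>a b. a \<in> K \<Longrightarrow> b \<in> K \<Longrightarrow> a - b \<in> K" "\<And>a b. a \<in> K \<Longrightarrow> b \<in> K \<Longrightarrow> a + b \<in> K"
  shows "coset K x = coset K y \<longleftrightarrow> x - y \<in> K"
proof
  assume "coset K x = coset K y"
  then have "x \<in> coset K y" using assms(1) unfolding coset_def by (metis add.right_neutral image_eqI)
  then obtain k where "k \<in> K" "x = y + k" unfolding coset_def by auto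
  then show "x - y \<in> K" by simp
next
  assume h: "x - y \<in> K"
  have "0 - (x - y) \<in> K" using assms(1,2) h by blast
  then have h2: "y - x \<in> K" by simp
  show "coset K x = coset K y"
  proof
    show "coset K x \<subseteq> coset K y"
    proof
      fix z assume "z \<in> coset K x"
      then obtain k where k: "k \<in> K" "z = x + k" unfolding coset_def by auto
      then have "z = y + ((x - y) + k)" by simp
      moreover have "(x - y) + k \<in> K" using assms(3) h k by blast
      ultimately show "z \<in> coset K y" unfolding coset_def by blast
    qed
    show "coset K y \<subseteq> coset K x"
    proof
      fix z assume "z \<in> coset K y"
      then obtain k where k: "k \<in> K" "z = y + k" unfolding coset_def by auto
      then have "z = x + ((y - x) + k)" by simp
      moreover have "(y - x) + k \<in> K" using assms(3) h2 k by blast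
      ultimately show "z \<in> coset K x" unfolding coset_def by blast
    qed
  qed
qed

locale lie = vector_space scale for scale :: "'a::field \<Rightarrow> 'v::ab_group_add \<Rightarrow> 'v" +
  fixes br :: "'v \<Rightarrow> 'v \<Rightarrow> 'v"
  assumes lie: "lie_algebra scale br"
begin

lemma br_addL: "br (x + y) z = br x z + br y z" using lie unfolding lie_algebra_def by blast
lemma br_addR: "br x (y + z) = br x y + br x z" using lie unfolding lie_algebra_def by blast
lemma br_alt: "br x x = 0" using lie unfolding lie_algebra_def by blast
lemma br_scaleL: "br (scale c x) y = scale c (br x y)" using lie unfolding lie_algebra_def by blast
lemma br_scaleR: "br x (scale c y) = scale c (br x y)" using lie unfolding lie_algebra_def by blast
lemma br_0L: "br 0 z = 0" using br_addL[of 0 0 z] by simp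
lemma br_0R: "br z 0 = 0" using br_addR[of z 0 0] by simp
lemma br_negL: "br (- x) z = - br x z"
  using br_addL[of x "-x" z] br_0L by (metis minus_unique add.right_inverse)
lemma br_negR: "br z (- x) = - br z x"
  using br_addR[of z x "-x"] br_0R by (metis minus_unique add.right_inverse)
lemma br_diffL: "br (x - y) z = br x z - br y z"
  using br_addL[of x "-y" z] br_negL[of y z] by simp
lemma br_diffR: "br z (x - y) = br z x - br z y"
  using br_addR[of z x "-y"] br_negR[of z y] by simp
lemma br_anti: "br x y = - br y x"
proof -
  have e: "br (x + y) (x + y) = (br x x + br x y) + (br y x + br y y)" unfolding br_addL br_addR by (simp add: ac_simps)
  have "0 = br (x + y) (x + y)" by (simp add: br_alt)
  also have "\<dots> = br x y + br y x" using e by (simp add: br_alt)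
  finally have "br x y + br y x = 0" by simp
  then show ?thesis by (simp add: eq_neg_iff_add_eq_0)
qed

lemma ideal_subspace: "lie_ideal scale br I \<Longrightarrow> subspace I"
  unfolding lie_ideal_def by blast
lemma idealL: "lie_ideal scale br I \<Longrightarrow> y \<in> I \<Longrightarrow> br x y \<in> I"
  unfolding lie_ideal_def by blast
lemma idealR: "lie_ideal scale br I \<Longrightarrow> y \<in> I \<Longrightarrow> br y x \<in> I"
  using br_anti[of y x] idealL[of I y x] ideal_subspace subspace_neg by metis
lemma ideal_subalg: "lie_ideal scale br I \<Longrightarrow> lie_subalgebra scale br I"
  unfolding lie_ideal_def lie_subalgebra_def by blast
lemma ideal_Int: "lie_ideal scale br I \<Longrightarrow> lie_ideal scale br J \<Longrightarrow> lie_ideal scale br (I \<inter> J)"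
  unfolding lie_ideal_def using subspace_inter by blast
lemma ssum_subspace: "subspace S \<Longrightarrow> subspace T \<Longrightarrow> subspace (ssum S T)"
  unfolding ssum_def by (rule subspace_sums)
lemma ideal_ssum: assumes "lie_ideal scale br I" "lie_ideal scale br J"
  shows "lie_ideal scale br (ssum I J)"
  unfolding lie_ideal_def
proof (intro conjI allI ballI)
  show "subspace (ssum I J)" using assms ideal_subspace ssum_subspace by blast
  fix x y assume "y \<in> ssum I J"
  then obtain a b where "a \<in> I" "b \<in> J" "y = a + b" unfolding ssum_def by auto
  then show "br x y \<in> ssum I J" unfolding ssum_def using assms idealL br_addR by blast
qed
lemma ssum_mono: "S \<subseteq> S' \<Longrightarrow> T \<subseteq> T' \<Longrightarrow> ssum S T \<subseteq> ssum S' T'"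
  unfolding ssum_def by blast
lemma ssum_sub: "subspace U \<Longrightarrow> S \<subseteq> U \<Longrightarrow> T \<subseteq> U \<Longrightarrow> ssum S T \<subseteq> U"
  unfolding ssum_def using subspace_add by blast
lemma ssum_left: "subspace T \<Longrightarrow> S \<subseteq> ssum S T"
  unfolding ssum_def using subspace_0 by force
lemma ssum_right: "subspace S \<Longrightarrow> T \<subseteq> ssum S T"
  unfolding ssum_def using subspace_0 by force
lemma ssum_comm: "ssum S T = ssum T S"
  unfolding ssum_def by (auto; metis add.commute)


lemma ssumI: "a \<in> S \<Longrightarrow> b \<in> T \<Longrightarrow> a + b \<in> ssum S T"
  unfolding ssum_def by blast
lemma ssumE: assumes "z \<in> ssum S T" obtains a b where "a \<in> S" "b \<in> T" "z = a + b"
  using assms unfolding ssum_def by blast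

lemma subalg_subspace: "lie_subalgebra scale br S \<Longrightarrow> subspace S"
  unfolding lie_subalgebra_def by blast

lemma core:
  assumes M: "maximal_subalgebra scale br M" and C: "ideal_completion scale br M C"
  shows core_ideal: "lie_ideal scale br (strict_core scale br C)"
    and core_subC: "strict_core scale br C \<subseteq> C"
    and core_subM: "strict_core scale br C \<subseteq> M"
    and core_max: "\<And>I. lie_ideal scale br I \<Longrightarrow> I \<subseteq> C \<Longrightarrow> I \<noteq> C \<Longrightarrow> I \<subseteq> strict_core scale br C"
    and C_notM: "\<not> C \<subseteq> M"
    and C_M: "ssum C M = UNIV"
proof -
  define U where "U = \<Union>{I. lie_ideal scale br I \<and> lie_subalgebra scale br I \<and> I \<subset> C}"
  have K: "strict_core scale br C = span U" unfolding strict_core_def U_def by simp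
  have Ci: "lie_ideal scale br C" using C unfolding ideal_completion_def by blast
  have Cs: "subspace C" using Ci ideal_subspace by blast
  have Msa: "lie_subalgebra scale br M" using M unfolding maximal_subalgebra_def by blast
  have Ms: "subspace M" using Msa subalg_subspace by blast
  have comp: "\<And>I. lie_subalgebra scale br I \<Longrightarrow> I \<subset> C \<Longrightarrow> lie_ideal scale br I \<Longrightarrow> I \<subseteq> M"
    using C unfolding ideal_completion_def completion_def by blast
  show "strict_core scale br C \<subseteq> C" unfolding K by (rule span_minimal) (auto simp: U_def Cs)
  show "strict_core scale br C \<subseteq> M" unfolding K
    by (rule span_minimal) (use comp Ms in \<open>auto simp: U_def\<close>)
  show "\<And>I. lie_ideal scale br I \<Longrightarrow> I \<subseteq> C \<Longrightarrow> I \<noteq> C \<Longrightarrow> I \<subseteq> strict_core scale br C"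
  proof -
    fix I assume "lie_ideal scale br I" "I \<subseteq> C" "I \<noteq> C"
    then have "I \<subseteq> U" unfolding U_def using ideal_subalg by blast
    then show "I \<subseteq> strict_core scale br C" unfolding K using span_superset by blast
  qed
  show "lie_ideal scale br (strict_core scale br C)" unfolding lie_ideal_def K
  proof (intro conjI allI ballI)
    show "subspace (span U)" by simp
    fix x y assume y: "y \<in> span U"
    show "br x y \<in> span U"
    proof (rule span_induct[OF y, where P="\<lambda>y. br x y \<in> span U"])
      show "subspace {y. br x y \<in> span U}"
        unfolding subspace_def using br_0R br_addR br_scaleR span_zero span_add span_scale by auto
      fix z assume "z \<in> U"
      then obtain I where I: "lie_ideal scale br I" "lie_subalgebra scale br I" "I \<subset> C" "z \<in> I"
        unfolding U_def by blast
      then have "br x z \<in> I" using idealL by blast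
      then have "br x z \<in> U" unfolding U_def using I by blast
      then show "br x z \<in> span U" using span_superset by blast
    qed
  qed
  show nCM: "\<not> C \<subseteq> M" using C unfolding ideal_completion_def completion_def by blast
  have sa: "lie_subalgebra scale br (ssum C M)" unfolding lie_subalgebra_def
  proof (intro conjI ballI)
    show "subspace (ssum C M)" using Cs Ms ssum_subspace by blast
    fix x y assume "x \<in> ssum C M" "y \<in> ssum C M"
    then obtain c m c' m' where cm: "c \<in> C" "m \<in> M" "x = c + m" "c' \<in> C" "m' \<in> M" "y = c' + m'"
      by (metis ssumE)
    have e: "br x y = (br c c' + br c m' + br m c') + br m m'"
      unfolding cm br_addL br_addR by (simp add: ac_simps)
    have "br c c' + br c m' + br m c' \<in> C"
      using cm Cs Ci idealL idealR subspace_add by metis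
    moreover have "br m m' \<in> M" using Msa cm unfolding lie_subalgebra_def by blast
    ultimately show "br x y \<in> ssum C M" unfolding e by (rule ssumI)
  qed
  have "M \<subseteq> ssum C M" using ssum_right Cs by blast
  then have "ssum C M = M \<or> ssum C M = UNIV" using M sa unfolding maximal_subalgebra_def by blast
  moreover have "C \<subseteq> ssum C M" using ssum_left Ms by blast
  ultimately show "ssum C M = UNIV" using nCM by blast
qed

lemma between:
  assumes M: "maximal_subalgebra scale br M" and C: "ideal_completion scale br M C"
    and J: "lie_ideal scale br J" and I: "lie_ideal scale br I"
    and lo: "ssum (strict_core scale br C) J \<subseteq> I" and hi: "I \<subseteq> ssum C J"
  shows "I = ssum (strict_core scale br C) J \<or> I = ssum C J"
proof -
  let ?K = "strict_core scale br C"
  have Ci: "lie_ideal scale br C" using C unfolding ideal_completion_def by blast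
  have Ks: "subspace ?K" using core_ideal[OF M C] ideal_subspace by blast
  have Is: "subspace I" using I ideal_subspace by blast
  have JI: "J \<subseteq> I" using lo ssum_right[OF Ks] by blast
  show ?thesis
  proof (cases "I \<inter> C = C")
    case True
    then have "ssum C J \<subseteq> I" using ssum_sub[OF Is] JI by blast
    then show ?thesis using hi by blast
  next
    case False
    have "I \<inter> C \<subseteq> ?K" using core_max[OF M C] ideal_Int[OF I Ci] False by blast
    have "I \<subseteq> ssum ?K J"
    proof
      fix z assume z: "z \<in> I"
      then obtain c j where cj: "c \<in> C" "j \<in> J" "z = c + j" using hi by (metis subsetD ssumE)
      have "c = z - j" using cj by simp
      then have "c \<in> I" using z cj JI Is subspace_diff by blast
      then have "c \<in> ?K" using cj \<open>I \<inter> C \<subseteq> ?K\<close> by blast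
      then show "z \<in> ssum ?K J" using cj ssumI by blast
    qed
    then show ?thesis using lo by blast
  qed
qed


lemma coset_sub: "subspace K \<Longrightarrow> coset K x = coset K y \<longleftrightarrow> x - y \<in> K"
  by (rule coset_eq) (auto simp: subspace_0 subspace_diff subspace_add)

lemma diff_sym: "subspace K \<Longrightarrow> x - y \<in> K \<Longrightarrow> y - x \<in> K"
  using subspace_neg[of K "x - y"] by simp

lemma rel_iso:
  fixes R :: "'v \<Rightarrow> 'v \<Rightarrow> bool"
  assumes sC: "subspace C" and sD: "subspace D" and K: "subspace K" and J: "lie_ideal scale br J"
    and brC: "\<And>x y. x \<in> C \<Longrightarrow> y \<in> C \<Longrightarrow> br x y \<in> C"
    and brD: "\<And>x y. x \<in> D \<Longrightarrow> y \<in> D \<Longrightarrow> br x y \<in> D"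
    and ex1: "\<And>x. x \<in> C \<Longrightarrow> \<exists>x'\<in>D. R x x'"
    and ex2: "\<And>x'. x' \<in> D \<Longrightarrow> \<exists>x\<in>C. R x x'"
    and wd: "\<And>x x' y y'. x \<in> C \<Longrightarrow> y \<in> C \<Longrightarrow> x' \<in> D \<Longrightarrow> y' \<in> D \<Longrightarrow> R x x' \<Longrightarrow> R y y'
              \<Longrightarrow> (x - y \<in> K \<longleftrightarrow> x' - y' \<in> J)"
    and radd: "\<And>x x' y y'. x \<in> C \<Longrightarrow> y \<in> C \<Longrightarrow> x' \<in> D \<Longrightarrow> y' \<in> D \<Longrightarrow> R x x' \<Longrightarrow> R y y'
              \<Longrightarrow> R (x + y) (x' + y')"
    and rscale: "\<And>x x' c. x \<in> C \<Longrightarrow> x' \<in> D \<Longrightarrow> R x x' \<Longrightarrow> R (scale c x) (scale c x')"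
    and rbr: "\<And>x x' y y'. x \<in> C \<Longrightarrow> y \<in> C \<Longrightarrow> x' \<in> D \<Longrightarrow> y' \<in> D \<Longrightarrow> R x x' \<Longrightarrow> R y y'
              \<Longrightarrow> R (br x y) (br x' y')"
  shows "quotient_lie_iso scale br C K D J"
proof -
  have Js: "subspace J" using J ideal_subspace by blast
  define g where "g S = coset J (SOME x'. \<exists>x\<in>C. S = coset K x \<and> x' \<in> D \<and> R x x')" for S
  have gx: "g (coset K x) = coset J x'" if a: "x \<in> C" "x' \<in> D" "R x x'" for x x'
  proof -
    let ?P = "\<lambda>x'. \<exists>x1\<in>C. coset K x = coset K x1 \<and> x' \<in> D \<and> R x1 x'"
    have "?P x'" using a by blast
    hence "?P (SOME x'. ?P x')" by (rule someI)
    then obtain x1 where x1: "x1 \<in> C" "coset K x = coset K x1" "(SOME x'. ?P x') \<in> D" "R x1 (SOME x'. ?P x')"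
      by blast
    have "x - x1 \<in> K" using x1(2) coset_sub[OF K] by blast
    hence "x' - (SOME x'. ?P x') \<in> J" using wd[OF a(1) x1(1) a(2) x1(3) a(3) x1(4)] by blast
    hence "(SOME x'. ?P x') - x' \<in> J" using diff_sym[OF Js] by blast
    thus ?thesis unfolding g_def using coset_sub[OF Js] by blast
  qed
  have gex: "\<exists>x'\<in>D. R x x' \<and> g (coset K x) = coset J x'" if "x \<in> C" for x
    using ex1[OF that] gx[OF that] by blast
  show ?thesis unfolding quotient_lie_iso_def
  proof (intro exI conjI ballI allI impI)
    show "bij_betw g (quotient_set C K) (quotient_set D J)"
      unfolding bij_betw_def
    proof
      show "inj_on g (quotient_set C K)"
      proof (rule inj_onI)
        fix S T assume "S \<in> quotient_set C K" "T \<in> quotient_set C K" and gST: "g S = g T"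
        then obtain x y where xy: "x \<in> C" "y \<in> C" "S = coset K x" "T = coset K y"
          unfolding quotient_set_def by blast
        obtain x' where x': "x' \<in> D" "R x x'" "g (coset K x) = coset J x'" using gex[OF xy(1)] by blast
        obtain y' where y': "y' \<in> D" "R y y'" "g (coset K y) = coset J y'" using gex[OF xy(2)] by blast
        have "coset J x' = coset J y'" using gST xy x' y' by simp
        then have "x' - y' \<in> J" using coset_sub[OF Js] by blast
        then have "x - y \<in> K" using wd[OF xy(1,2) x'(1) y'(1) x'(2) y'(2)] by blast
        then show "S = T" using xy coset_sub[OF K] by blast
      qed
      show "g ` quotient_set C K = quotient_set D J"
      proof
        show "g ` quotient_set C K \<subseteq> quotient_set D J"
          using gex unfolding quotient_set_def by blast
        show "quotient_set D J \<subseteq> g ` quotient_set C K"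
        proof
          fix T assume "T \<in> quotient_set D J"
          then obtain x' where x': "x' \<in> D" "T = coset J x'" unfolding quotient_set_def by blast
          then obtain x where x: "x \<in> C" "R x x'" using ex2 by blast
          then have "T = g (coset K x)" using gx x' by simp
          then show "T \<in> g ` quotient_set C K" using x unfolding quotient_set_def by blast
        qed
      qed
    qed
    fix x y x' y' c
    assume xy: "x \<in> C" "y \<in> C" "x' \<in> D" "y' \<in> D"
      and h: "g (coset K x) = coset J x' \<and> g (coset K y) = coset J y'"
    obtain xr where xr: "xr \<in> D" "R x xr" "g (coset K x) = coset J xr" using gex[OF xy(1)] by blast
    obtain yr where yr: "yr \<in> D" "R y yr" "g (coset K y) = coset J yr" using gex[OF xy(2)] by blast
    have "coset J xr = coset J x'" using h xr by simp
    then have dx: "xr - x' \<in> J" using coset_sub[OF Js] by blast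
    have "coset J yr = coset J y'" using h yr by simp
    then have dy: "yr - y' \<in> J" using coset_sub[OF Js] by blast
    have "g (coset K (x + y)) = coset J (xr + yr)"
      using gx[OF subspace_add[OF sC xy(1,2)] subspace_add[OF sD xr(1) yr(1)] radd[OF xy(1,2) xr(1) yr(1) xr(2) yr(2)]] .
    moreover have "(xr + yr) - (x' + y') \<in> J"
      using subspace_add[OF Js dx dy] by (simp add: algebra_simps)
    ultimately show "g (coset K (x + y)) = coset J (x' + y')" using coset_sub[OF Js] by simp
    have "g (coset K (scale c x)) = coset J (scale c xr)"
      using gx[OF subspace_scale[OF sC xy(1)] subspace_scale[OF sD xr(1)] rscale[OF xy(1) xr(1,2)]] .
    moreover have "scale c xr - scale c x' \<in> J"
      using subspace_scale[OF Js dx, of c] by (simp add: scale_right_diff_distrib)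
    ultimately show "g (coset K (scale c x)) = coset J (scale c x')" using coset_sub[OF Js] by simp
    have "g (coset K (br x y)) = coset J (br xr yr)"
      using gx[OF brC[OF xy(1,2)] brD[OF xr(1) yr(1)] rbr[OF xy(1,2) xr(1) yr(1) xr(2) yr(2)]] .
    moreover have "br xr yr - br x' y' \<in> J"
    proof -
      have "br xr yr - br x' y' = br (xr - x') yr + br x' (yr - y')"
        by (simp add: br_diffL br_diffR)
      moreover have "br (xr - x') yr \<in> J" using idealR[OF J dx] .
      moreover have "br x' (yr - y') \<in> J" using idealL[OF J dy] .
      ultimately show ?thesis using subspace_add[OF Js] by simp
    qed
    ultimately show "g (coset K (br x y)) = coset J (br x' y')" using coset_sub[OF Js] by simp
  qed
qed


lemma CD_M:
  assumes M: "maximal_subalgebra scale br M" and C: "ideal_completion scale br M C"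
    and D: "ideal_completion scale br M D" and ne: "C \<noteq> D"
  shows "C \<inter> D \<subseteq> M"
proof (rule ccontr)
  assume nm: "\<not> C \<inter> D \<subseteq> M"
  have Ci: "lie_ideal scale br C" using C unfolding ideal_completion_def by blast
  have Di: "lie_ideal scale br D" using D unfolding ideal_completion_def by blast
  have Ii: "lie_ideal scale br (C \<inter> D)" using ideal_Int[OF Ci Di] .
  have "C \<inter> D = C"
  proof (rule ccontr)
    assume "C \<inter> D \<noteq> C"
    then have "C \<inter> D \<subseteq> strict_core scale br C" using core_max[OF M C Ii] by blast
    then show False using nm core_subM[OF M C] by blast
  qed
  moreover have "C \<inter> D = D"
  proof (rule ccontr)
    assume "C \<inter> D \<noteq> D"
    then have "C \<inter> D \<subseteq> strict_core scale br D" using core_max[OF M D Ii] by blast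
    then show False using nm core_subM[OF M D] by blast
  qed
  ultimately show False using ne by blast
qed

lemma small_cap:
  assumes M: "maximal_subalgebra scale br M" and C: "ideal_completion scale br M C"
    and D: "ideal_completion scale br M D"
  shows "strict_core scale br C \<inter> D \<subseteq> strict_core scale br D"
proof (cases "C = D")
  case True
  then show ?thesis by blast
next
  case False
  have CDM: "C \<inter> D \<subseteq> M" using CD_M[OF M C D False] .
  have Ci: "lie_ideal scale br C" using C unfolding ideal_completion_def by blast
  have Di: "lie_ideal scale br D" using D unfolding ideal_completion_def by blast
  have Ii: "lie_ideal scale br (C \<inter> D)" using ideal_Int[OF Ci Di] .
  have "C \<inter> D \<noteq> D" using CDM C_notM[OF M D] by blast
  then have "C \<inter> D \<subseteq> strict_core scale br D" using core_max[OF M D Ii] by blast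
  then show ?thesis using core_subC[OF M C] by blast
qed

lemma case2:
  assumes M: "maximal_subalgebra scale br M" and C: "ideal_completion scale br M C"
    and D: "ideal_completion scale br M D"
    and P: "ssum C (strict_core scale br D) \<inter> ssum D (strict_core scale br C)
            = ssum (strict_core scale br C) (strict_core scale br D)"
  shows "D \<inter> M \<subseteq> strict_core scale br D"
proof -
  let ?K = "strict_core scale br C" and ?J = "strict_core scale br D"
  have Ci: "lie_ideal scale br C" using C unfolding ideal_completion_def by blast
  have Di: "lie_ideal scale br D" using D unfolding ideal_completion_def by blast
  have Ki: "lie_ideal scale br ?K" using core_ideal[OF M C] .
  have Ji: "lie_ideal scale br ?J" using core_ideal[OF M D] .
  have Ks: "subspace ?K" and Js: "subspace ?J" and Ds: "subspace D"
    using Ki Ji Di ideal_subspace by blast+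
  have Msa: "lie_subalgebra scale br M" using M unfolding maximal_subalgebra_def by blast
  have Ms: "subspace M" using Msa subalg_subspace by blast
  have KM: "?K \<subseteq> M" using core_subM[OF M C] .
  have JM: "?J \<subseteq> M" using core_subM[OF M D] .
  have JD: "?J \<subseteq> D" using core_subC[OF M D] .
  define N where "N = ssum D ?K \<inter> M"
  have lo: "ssum ?J ?K \<subseteq> N" unfolding N_def
    using ssum_mono[OF JD subset_refl] ssum_sub[OF Ms JM KM] by blast
  have PN: "ssum ?K ?J \<subseteq> N" using lo ssum_comm by metis
  have DKi: "lie_ideal scale br (ssum D ?K)" using ideal_ssum[OF Di Ki] .
  have Ni: "lie_ideal scale br N" unfolding lie_ideal_def
  proof (intro conjI allI ballI)
    show Ns: "subspace N" unfolding N_def using subspace_inter ideal_subspace[OF DKi] Ms by blast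
    fix x n assume n: "n \<in> N"
    have "x \<in> ssum C M" using C_M[OF M C] by simp
    then obtain c m where cm: "c \<in> C" "m \<in> M" "x = c + m" by (rule ssumE)
    have e: "br x n = br c n + br m n" using cm br_addL by simp
    have "br c n \<in> C" using idealR[OF Ci cm(1)] .
    then have "br c n \<in> ssum C ?J" using ssum_left[OF Js] by blast
    moreover have "br c n \<in> ssum D ?K" using idealL[OF DKi] n unfolding N_def by blast
    ultimately have 1: "br c n \<in> N" using P PN by blast
    have "br m n \<in> M" using Msa cm n unfolding lie_subalgebra_def N_def by blast
    moreover have "br m n \<in> ssum D ?K" using idealL[OF DKi] n unfolding N_def by blast
    ultimately have 2: "br m n \<in> N" unfolding N_def by blast
    show "br x n \<in> N" unfolding e using subspace_add[OF Ns 1 2] .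
  qed
  have hi: "N \<subseteq> ssum D ?K" unfolding N_def by blast
  have "N = ssum ?J ?K \<or> N = ssum D ?K" using between[OF M D Ki Ni lo hi] .
  moreover have "N \<noteq> ssum D ?K"
  proof
    assume "N = ssum D ?K"
    then have "D \<subseteq> M" using ssum_left[OF Ks, of D] unfolding N_def by blast
    then show False using C_notM[OF M D] by blast
  qed
  ultimately have NJK: "N = ssum ?J ?K" by blast
  show ?thesis
  proof
    fix d assume d: "d \<in> D \<inter> M"
    then have "d \<in> N" unfolding N_def using ssum_left[OF Ks, of D] by blast
    then obtain j k where jk: "j \<in> ?J" "k \<in> ?K" "d = j + k" unfolding NJK by (rule ssumE)
    have "k = d - j" using jk by simp
    then have "k \<in> D" using subspace_diff[OF Ds] d jk JD by blast
    then have "k \<in> ?J" using small_cap[OF M C D] jk by blast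
    then show "d \<in> ?J" using jk subspace_add[OF Js] by simp
  qed
qed


lemma main:
  assumes M: "maximal_subalgebra scale br M" and C: "ideal_completion scale br M C"
    and D: "ideal_completion scale br M D"
  shows "quotient_lie_iso scale br C (strict_core scale br C) D (strict_core scale br D)"
proof -
  let ?K = "strict_core scale br C" and ?J = "strict_core scale br D"
  have Ci: "lie_ideal scale br C" using C unfolding ideal_completion_def by blast
  have Di: "lie_ideal scale br D" using D unfolding ideal_completion_def by blast
  have Ki: "lie_ideal scale br ?K" using core_ideal[OF M C] .
  have Ji: "lie_ideal scale br ?J" using core_ideal[OF M D] .
  have Ks: "subspace ?K" and Js: "subspace ?J" and Ds: "subspace D" and Cs: "subspace C"
    using Ki Ji Di Ci ideal_subspace by blast+
  have Msa: "lie_subalgebra scale br M" using M unfolding maximal_subalgebra_def by blast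
  have Ms: "subspace M" using Msa subalg_subspace by blast
  have KM: "?K \<subseteq> M" using core_subM[OF M C] .
  have JM: "?J \<subseteq> M" using core_subM[OF M D] .
  have JD: "?J \<subseteq> D" using core_subC[OF M D] .
  have KC: "?K \<subseteq> C" using core_subC[OF M C] .
  have brC: "\<And>x y. x \<in> C \<Longrightarrow> y \<in> C \<Longrightarrow> br x y \<in> C" using Ci idealL by blast
  have brD: "\<And>x y. x \<in> D \<Longrightarrow> y \<in> D \<Longrightarrow> br x y \<in> D" using Di idealL by blast
  define P where "P = ssum C ?J \<inter> ssum D ?K"
  have Pi: "lie_ideal scale br P" unfolding P_def
    using ideal_Int[OF ideal_ssum[OF Ci Ji] ideal_ssum[OF Di Ki]] .
  have lo1: "ssum ?K ?J \<subseteq> P" unfolding P_def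
    using ssum_mono[OF KC subset_refl, of ?J] ssum_mono[OF JD subset_refl, of ?K] ssum_comm[of ?K ?J]
    by blast
  have lo2: "ssum ?J ?K \<subseteq> P" using lo1 ssum_comm by metis
  have b1: "P = ssum ?K ?J \<or> P = ssum C ?J"
    using between[OF M C Ji Pi lo1] unfolding P_def by blast
  have b2: "P = ssum ?J ?K \<or> P = ssum D ?K"
    using between[OF M D Ki Pi lo2] unfolding P_def by blast
  show ?thesis
  proof (cases "P = ssum ?K ?J")
    case True
    have DM: "D \<inter> M \<subseteq> ?J" using case2[OF M C D] True unfolding P_def by blast
    have "ssum D ?K \<inter> ssum C ?J = ssum ?J ?K" using True unfolding P_def
      by (metis Int_commute ssum_comm)
    then have CM: "C \<inter> M \<subseteq> ?K" using case2[OF M D C] by blast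
    have KJM: "ssum ?K ?J \<subseteq> M" using ssum_sub[OF Ms KM JM] .
    have ne: "C \<noteq> D"
    proof
      assume "C = D"
      then have "C \<subseteq> P" unfolding P_def using ssum_left[OF Js, of C] ssum_left[OF Ks, of D] by blast
      then show False using True KJM C_notM[OF M C] by blast
    qed
    have CDM: "C \<inter> D \<subseteq> M" using CD_M[OF M C D ne] .
    show ?thesis
    proof (rule rel_iso[where R="\<lambda>x x'. x + x' \<in> M", OF Cs Ds Ks Ji brC brD])
      fix x assume x: "x \<in> C"
      have "- x \<in> ssum D M" using C_M[OF M D] by simp
      then obtain d m where dm: "d \<in> D" "m \<in> M" "- x = d + m" by (rule ssumE)
      have "x = - (d + m)" using dm(3) by (metis minus_minus)
      then have "x + d = - m" by (simp add: minus_add_distrib add.commute add.left_commute)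
      then have "x + d \<in> M" using subspace_neg[OF Ms dm(2)] by simp
      then show "\<exists>x'\<in>D. x + x' \<in> M" using dm(1) by blast
    next
      fix x' assume x': "x' \<in> D"
      have "- x' \<in> ssum C M" using C_M[OF M C] by simp
      then obtain c m where cm: "c \<in> C" "m \<in> M" "- x' = c + m" by (rule ssumE)
      have "x' = - (c + m)" using cm(3) by (metis minus_minus)
      then have "c + x' = - m" by (simp add: minus_add_distrib add.commute add.left_commute)
      then have "c + x' \<in> M" using subspace_neg[OF Ms cm(2)] by simp
      then show "\<exists>x\<in>C. x + x' \<in> M" using cm(1) by blast
    next
      fix x x' y y' assume m: "x \<in> C" "y \<in> C" "x' \<in> D" "y' \<in> D" and r: "x + x' \<in> M" "y + y' \<in> M"
      have rM: "(x + x') - (y + y') \<in> M" using subspace_diff[OF Ms r] .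
      show "x - y \<in> ?K \<longleftrightarrow> x' - y' \<in> ?J"
      proof
        assume "x - y \<in> ?K"
        then have "x - y \<in> M" using KM by blast
        then have "((x + x') - (y + y')) - (x - y) \<in> M" using subspace_diff[OF Ms rM] by blast
        then have "x' - y' \<in> M" by (simp add: algebra_simps)
        moreover have "x' - y' \<in> D" using subspace_diff[OF Ds m(3,4)] .
        ultimately show "x' - y' \<in> ?J" using DM by blast
      next
        assume "x' - y' \<in> ?J"
        then have "x' - y' \<in> M" using JM by blast
        then have "((x + x') - (y + y')) - (x' - y') \<in> M" using subspace_diff[OF Ms rM] by blast
        then have "x - y \<in> M" by (simp add: algebra_simps)
        moreover have "x - y \<in> C" using subspace_diff[OF Cs m(1,2)] .
        ultimately show "x - y \<in> ?K" using CM by blast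
      qed
    next
      fix x x' y y' assume m: "x \<in> C" "y \<in> C" "x' \<in> D" "y' \<in> D" and r: "x + x' \<in> M" "y + y' \<in> M"
      have "(x + y) + (x' + y') = (x + x') + (y + y')" by (simp add: ac_simps)
      then show "(x + y) + (x' + y') \<in> M" using subspace_add[OF Ms r] by metis
    next
      fix x x' c assume "x \<in> C" "x' \<in> D" and r: "x + x' \<in> M"
      have "scale c x + scale c x' = scale c (x + x')" by (simp add: scale_right_distrib)
      then show "scale c x + scale c x' \<in> M" using subspace_scale[OF Ms r] by metis
    next
      fix x x' y y' assume m: "x \<in> C" "y \<in> C" "x' \<in> D" "y' \<in> D" and r: "x + x' \<in> M" "y + y' \<in> M"
      have 1: "br (x + x') (y + y') \<in> M" using Msa r unfolding lie_subalgebra_def by blast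
      have "br x y' \<in> C \<inter> D" using idealR[OF Ci m(1)] idealL[OF Di m(4)] by blast
      then have 2: "br x y' \<in> M" using CDM by blast
      have "br x' y \<in> C \<inter> D" using idealL[OF Ci m(2)] idealR[OF Di m(3)] by blast
      then have 3: "br x' y \<in> M" using CDM by blast
      have e: "br x y + br x' y' = (br (x + x') (y + y') - br x y') - br x' y"
        by (simp add: br_addL br_addR algebra_simps)
      show "br x y + br x' y' \<in> M" unfolding e
        using subspace_diff[OF Ms subspace_diff[OF Ms 1 2] 3] .
    qed
  next
    case False
    have P1: "P = ssum C ?J" using b1 False by blast
    have P2: "P = ssum D ?K" using b2 False ssum_comm by metis
    define E where "E = ssum ?K ?J"
    have Ei: "lie_ideal scale br E" unfolding E_def using ideal_ssum[OF Ki Ji] .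
    have Es: "subspace E" using Ei ideal_subspace by blast
    have KE: "?K \<subseteq> E" unfolding E_def using ssum_left[OF Js] .
    have JE: "?J \<subseteq> E" unfolding E_def using ssum_right[OF Ks] .
    have EJ: "E \<inter> D \<subseteq> ?J"
    proof
      fix e assume e: "e \<in> E \<inter> D"
      then obtain k j where kj: "k \<in> ?K" "j \<in> ?J" "e = k + j" unfolding E_def by (meson IntD1 ssumE)
      have "k = e - j" using kj by simp
      then have "k \<in> D" using subspace_diff[OF Ds] e kj JD by blast
      then have "k \<in> ?J" using small_cap[OF M C D] kj by blast
      then show "e \<in> ?J" using kj subspace_add[OF Js] by simp
    qed
    have EK: "E \<inter> C \<subseteq> ?K"
    proof
      fix e assume e: "e \<in> E \<inter> C"
      then obtain k j where kj: "k \<in> ?K" "j \<in> ?J" "e = k + j" unfolding E_def by (meson IntD1 ssumE)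
      have "j = e - k" using kj by simp
      then have "j \<in> C" using subspace_diff[OF Cs] e kj KC by blast
      then have "j \<in> ?K" using small_cap[OF M D C] kj by blast
      then show "e \<in> ?K" using kj subspace_add[OF Ks] by simp
    qed
    show ?thesis
    proof (rule rel_iso[where R="\<lambda>x x'. x - x' \<in> E", OF Cs Ds Ks Ji brC brD])
      fix x assume x: "x \<in> C"
      then have "x \<in> ssum D ?K" using ssum_left[OF Js, of C] P1 P2 by blast
      then obtain d k where dk: "d \<in> D" "k \<in> ?K" "x = d + k" by (rule ssumE)
      then have "x - d \<in> E" using KE by auto
      then show "\<exists>x'\<in>D. x - x' \<in> E" using dk(1) by blast
    next
      fix x' assume x': "x' \<in> D"
      then have "x' \<in> ssum C ?J" using ssum_left[OF Ks, of D] P1 P2 by blast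
      then obtain c j where cj: "c \<in> C" "j \<in> ?J" "x' = c + j" by (rule ssumE)
      then have "c - x' = - j" by simp
      then have "c - x' \<in> E" using subspace_neg[OF Es] JE cj(2) by auto
      then show "\<exists>x\<in>C. x - x' \<in> E" using cj(1) by blast
    next
      fix x x' y y' assume m: "x \<in> C" "y \<in> C" "x' \<in> D" "y' \<in> D" and r: "x - x' \<in> E" "y - y' \<in> E"
      have f: "(x - y) - (x' - y') \<in> E"
      proof -
        have "(x - y) - (x' - y') = (x - x') - (y - y')" by (simp add: algebra_simps)
        then show ?thesis using subspace_diff[OF Es r] by metis
      qed
      show "x - y \<in> ?K \<longleftrightarrow> x' - y' \<in> ?J"
      proof
        assume "x - y \<in> ?K"
        then have "(x - y) - ((x - y) - (x' - y')) \<in> E" using subspace_diff[OF Es _ f] KE by blast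
        then have "x' - y' \<in> E" by simp
        moreover have "x' - y' \<in> D" using subspace_diff[OF Ds m(3,4)] .
        ultimately show "x' - y' \<in> ?J" using EJ by blast
      next
        assume "x' - y' \<in> ?J"
        then have "((x - y) - (x' - y')) + (x' - y') \<in> E" using subspace_add[OF Es f] JE by blast
        then have "x - y \<in> E" by simp
        moreover have "x - y \<in> C" using subspace_diff[OF Cs m(1,2)] .
        ultimately show "x - y \<in> ?K" using EK by blast
      qed
    next
      fix x x' y y' assume m: "x \<in> C" "y \<in> C" "x' \<in> D" "y' \<in> D" and r: "x - x' \<in> E" "y - y' \<in> E"
      have "(x + y) - (x' + y') = (x - x') + (y - y')" by (simp add: algebra_simps)
      then show "(x + y) - (x' + y') \<in> E" using subspace_add[OF Es r] by metis
    next
      fix x x' c assume "x \<in> C" "x' \<in> D" and r: "x - x' \<in> E"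
      have "scale c x - scale c x' = scale c (x - x')" by (simp add: scale_right_diff_distrib)
      then show "scale c x - scale c x' \<in> E" using subspace_scale[OF Es r] by metis
    next
      fix x x' y y' assume m: "x \<in> C" "y \<in> C" "x' \<in> D" "y' \<in> D" and r: "x - x' \<in> E" "y - y' \<in> E"
      have e: "br x y - br x' y' = br (x - x') y + br x' (y - y')"
        by (simp add: br_diffL br_diffR)
      show "br x y - br x' y' \<in> E" unfolding e
        using subspace_add[OF Es idealR[OF Ei r(1)] idealL[OF Ei r(2)]] .
    qed
  qed
qed

end

theorem theorem2p1:
  fixes scale :: "'a::field \<Rightarrow> 'v::ab_group_add \<Rightarrow> 'v"
    and br :: "'v \<Rightarrow> 'v \<Rightarrow> 'v"
    and M C D :: "'v set"
  assumes "lie_algebra scale br"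
    and "finite_dim scale"
    and "maximal_subalgebra scale br M"
    and "ideal_completion scale br M C"
    and "ideal_completion scale br M D"
  shows "quotient_lie_iso scale br C (strict_core scale br C) D (strict_core scale br D)"
proof -
  interpret lie scale br
  proof (rule lie.intro)
    show "vector_space scale" using assms(1) unfolding lie_algebra_def by blast
    show "lie_axioms scale br" using assms(1) by (simp add: lie_axioms_def)
  qed
  show ?thesis using main[OF assms(3-5)] .
qed

end
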